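(* Let $a,b\in\mathbb N$ with $b\mid a$, let $\sigma$ be a $b$-core, and for $k\in\mathbb N$ let $$N_\sigma(k)=\#\{\lambda\in\mathcal C_a:\ \mathrm{core}_b\lambda=\sigma,\ \ell(\lambda)\le k\}.$$ Then there is a quasipolynomial $Q_\sigma(k)$ of degree $a-b$ and period $b$ such that $N_\sigma(k)=Q_\sigma(k)$ for all integers $k\ge\ell(\sigma)$. The leading coefficient of $Q_\sigma$ is $\dfrac{1}{\left((\frac ab-1)!\right)^{b}}$.
   Context: A partition $\lambda=(a_1,\dots,a_\ell)$ is a weakly decreasing finite sequence of positive integers; $\ell(\lambda)=\ell$ is its length. For $t\in\mathbb N$, a $t$-core is a partition whose Young diagram has no hook of size $t$; $\mathcal C_t$ is the set of $t$-cores, and $\mathrm{core}_t\lambda$ is obtained from $\lambda$ by successively removing rim hooks (border strips) of size $t$ until none remain (independent of choices). A function $Q:\mathbb N\to\mathbb Q$ is a quasipolynomial of period $p$ if for each $0\le i<p$ the function $n\mapsto Q(i+np)$ ($n\ge0$) is a polynomial $P_i$; its degree is the maximum degree of the $P_i$. "The leading coefficient of $Q$ is $c$" means each $P_i$ (for the stated period) has degree equal to that of $Q$ and leading coefficient $c$. *)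

theory Defs
  imports "HOL-Computational_Algebra.Polynomial"
begin

definition is_partition :: "nat list \<Rightarrow> bool" where
  "is_partition lam \<longleftrightarrow> sorted_wrt (\<ge>) lam \<and> (\<forall>x\<in>set lam. 0 < x)"

text \<open>Young diagram (0-indexed rows i and columns j).\<close>

definition cells :: "nat list \<Rightarrow> (nat \<times> nat) set" where
  "cells lam = {(i, j). i < length lam \<and> j < lam ! i}"

definition hook_length :: "nat list \<Rightarrow> nat \<Rightarrow> nat \<Rightarrow> nat" where
  "hook_length lam i j =
     (lam ! i - j - 1) + card {k. i < k \<and> k < length lam \<and> j < lam ! k} + 1"

definition is_core :: "nat \<Rightarrow> nat list \<Rightarrow> bool" where
  "is_core t lam \<longleftrightarrow> (\<forall>(i, j)\<in>cells lam. hook_length lam i j \<noteq> t)"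

definition adjacent_cell :: "nat \<times> nat \<Rightarrow> nat \<times> nat \<Rightarrow> bool" where
  "adjacent_cell c d \<longleftrightarrow>
     (fst c = fst d \<and> (snd c = snd d + 1 \<or> snd d = snd c + 1)) \<or>
     (snd c = snd d \<and> (fst c = fst d + 1 \<or> fst d = fst c + 1))"

definition cells_connected :: "(nat \<times> nat) set \<Rightarrow> bool" where
  "cells_connected S \<longleftrightarrow> S \<noteq> {} \<and>
     (\<forall>x\<in>S. \<forall>y\<in>S. (x, y) \<in> ({(c, d). c \<in> S \<and> d \<in> S \<and> adjacent_cell c d})\<^sup>*)"

definition no_2x2 :: "(nat \<times> nat) set \<Rightarrow> bool" where
  "no_2x2 S \<longleftrightarrow> \<not> (\<exists>i j. (i, j) \<in> S \<and> (i + 1, j) \<in> S \<and> (i, j + 1) \<in> S \<and> (i + 1, j + 1) \<in> S)"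

definition remove_rim_hook :: "nat \<Rightarrow> nat list \<Rightarrow> nat list \<Rightarrow> bool" where
  "remove_rim_hook t lam mu \<longleftrightarrow>
     is_partition mu \<and> cells mu \<subseteq> cells lam \<and>
     card (cells lam - cells mu) = t \<and>
     cells_connected (cells lam - cells mu) \<and> no_2x2 (cells lam - cells mu)"

text \<open>The t-core: the t-core reached by successively removing rim hooks of size t
  (independent of choices).\<close>

definition core :: "nat \<Rightarrow> nat list \<Rightarrow> nat list" where
  "core t lam = (THE mu. (remove_rim_hook t)\<^sup>*\<^sup>* lam mu \<and> is_core t mu)"

definition N_sigma :: "nat \<Rightarrow> nat \<Rightarrow> nat list \<Rightarrow> nat \<Rightarrow> nat" where
  "N_sigma a b sigma k =
     card {lam. is_partition lam \<and> is_core a lam \<and> core b lam = sigma \<and> length lam \<le> k}"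

definition quasipoly_deg_lead :: "(nat \<Rightarrow> rat) \<Rightarrow> nat \<Rightarrow> nat \<Rightarrow> rat \<Rightarrow> bool" where
  "quasipoly_deg_lead Q p d c \<longleftrightarrow>
     (\<forall>i<p. \<exists>P :: rat poly. degree P = d \<and> lead_coeff P = c \<and>
        (\<forall>n. Q (i + n * p) = poly P (of_nat n)))"

end

theory Submission
  imports Defs "HOL-Library.FuncSet"
begin


definition pa :: "nat list \<Rightarrow> nat \<Rightarrow> nat" where
  "pa l i = (if i < length l then l ! i else 0)"

lemma pa_antitone:
  assumes "is_partition l" "i \<le> j"
  shows "pa l j \<le> pa l i"
proof -
  have s: "sorted_wrt (\<ge>) l" using assms(1) unfolding is_partition_def by auto
  show ?thesis
  proof (cases "j < length l")
    case True
    then show ?thesis using s assms(2) unfolding pa_def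
      by (cases "i = j") (auto simp: sorted_wrt_iff_nth_less)
  next
    case False
    then show ?thesis unfolding pa_def by auto
  qed
qed

lemma pa_pos:
  assumes "is_partition l"
  shows "0 < pa l i \<longleftrightarrow> i < length l"
  using assms unfolding pa_def is_partition_def by (auto simp: nth_mem)

lemma pa_zero: "length l \<le> i \<Longrightarrow> pa l i = 0"
  unfolding pa_def by auto

lemma cells_pa: "cells l = {(i, j). j < pa l i}"
  unfolding cells_def pa_def by (auto split: if_splits)

lemma part_eq:
  assumes "is_partition l1" "is_partition l2" "pa l1 = pa l2"
  shows "l1 = l2"
proof -
  have "length l1 = length l2"
  proof (rule ccontr)
    assume "length l1 \<noteq> length l2"
    then consider "length l1 < length l2" | "length l2 < length l1" by linarith
    then show False
    proof cases
      case 1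
      then have "0 < pa l2 (length l1)" using pa_pos[OF assms(2)] by auto
      then show False using assms(3) pa_zero[of l1 "length l1"] by auto
    next
      case 2
      then have "0 < pa l1 (length l2)" using pa_pos[OF assms(1)] by auto
      then show False using assms(3) pa_zero[of l2 "length l2"] by auto
    qed
  qed
  moreover have "\<And>i. i < length l1 \<Longrightarrow> l1 ! i = l2 ! i"
    using assms(3) \<open>length l1 = length l2\<close> unfolding pa_def by (metis)
  ultimately show ?thesis by (rule nth_equalityI)
qed

definition mkp :: "(nat \<Rightarrow> nat) \<Rightarrow> nat list" where
  "mkp f = map f [0..<(LEAST i. f i = 0)]"

lemma mkp:
  assumes anti: "\<And>i j. i \<le> j \<Longrightarrow> f j \<le> f i" and z: "f k = 0"
  shows "is_partition (mkp f)" "pa (mkp f) = f" "length (mkp f) \<le> k"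
proof -
  define n where "n = (LEAST i. f i = 0)"
  have fn: "f n = 0" unfolding n_def by (rule LeastI[of _ k]) (rule z)
  have nk: "n \<le> k" unfolding n_def by (rule Least_le) (rule z)
  have pos: "\<And>i. i < n \<Longrightarrow> 0 < f i" unfolding n_def using not_less_Least by blast
  have zer: "\<And>i. n \<le> i \<Longrightarrow> f i = 0" using anti fn by (metis le_zero_eq)
  have m: "mkp f = map f [0..<n]" unfolding mkp_def n_def ..
  show "length (mkp f) \<le> k" using m nk by simp
  show "pa (mkp f) = f"
    by (rule ext) (auto simp: m pa_def zer)
  show "is_partition (mkp f)"
    unfolding is_partition_def m
    using pos anti by (auto simp: sorted_wrt_iff_nth_less)
qed

definition bx :: "nat list \<Rightarrow> nat \<Rightarrow> nat \<Rightarrow> nat" where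
  "bx l k i = pa l i + (k - 1 - i)"

definition beta :: "nat \<Rightarrow> nat list \<Rightarrow> nat set" where
  "beta k l = bx l k ` {..<k}"

lemma bx_strict:
  assumes "is_partition l" "i < j" "j < k"
  shows "bx l k j < bx l k i"
  using pa_antitone[OF assms(1), of i j] assms(2,3) unfolding bx_def by linarith

lemma bx_mono_iff:
  assumes "is_partition l" "i < k" "j < k"
  shows "bx l k j < bx l k i \<longleftrightarrow> i < j"
  using bx_strict[OF assms(1)] assms
  by (metis less_asym' linorder_neqE_nat)

lemma bx_inj:
  assumes "is_partition l"
  shows "inj_on (bx l k) {..<k}"
  unfolding inj_on_def using bx_strict[OF assms]
  by (metis lessThan_iff less_irrefl linorder_neqE_nat)

lemma beta_card:
  assumes "is_partition l"
  shows "card (beta k l) = k" "finite (beta k l)"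
  unfolding beta_def using card_image[OF bx_inj[OF assms]] by auto

lemma bx_ge: "k - 1 - i \<le> bx l k i"
  unfolding bx_def by simp



definition closed :: "nat \<Rightarrow> nat set \<Rightarrow> bool" where
  "closed t B \<longleftrightarrow> (\<forall>x\<in>B. t \<le> x \<longrightarrow> x - t \<in> B)"

lemma hook_pa:
  assumes "(i, j) \<in> cells l"
  shows "hook_length l i j = (pa l i - j - 1) + card {k'. i < k' \<and> j < pa l k'} + 1"
proof -
  have "{k. i < k \<and> k < length l \<and> j < l ! k} = {k'. i < k' \<and> j < pa l k'}"
    unfolding pa_def by auto
  moreover have "l ! i = pa l i" using assms unfolding cells_def pa_def by auto
  ultimately show ?thesis unfolding hook_length_def by simp
qed

lemma leg_set:
  assumes "is_partition l" "j < pa l g" "pa l (Suc g) \<le> j" "i \<le> g"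
  shows "{k'. i < k' \<and> j < pa l k'} = {i<..g}"
proof (intro set_eqI iffI)
  fix k' assume "k' \<in> {k'. i < k' \<and> j < pa l k'}"
  then have "i < k'" "j < pa l k'" by auto
  moreover have "k' \<le> g"
  proof (rule ccontr)
    assume "\<not> k' \<le> g"
    then have "pa l k' \<le> pa l (Suc g)" using pa_antitone[OF assms(1)] by auto
    then show False using assms(3) \<open>j < pa l k'\<close> by linarith
  qed
  ultimately show "k' \<in> {i<..g}" by auto
next
  fix k' assume "k' \<in> {i<..g}"
  then show "k' \<in> {k'. i < k' \<and> j < pa l k'}"
    using pa_antitone[OF assms(1), of k' g] assms(2) by auto
qed

lemma gap_to_hook:
  assumes pl: "is_partition l" and lk: "length l \<le> k" and t: "0 < t"
    and ik: "i < k" and tx: "t \<le> bx l k i" and ny: "bx l k i - t \<notin> beta k l"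
  shows "\<exists>(i, j)\<in>cells l. hook_length l i j = t"
proof -
  define y where "y = bx l k i - t"
  define G where "G = {g. g < k \<and> y < bx l k g}"
  have iG: "i \<in> G" unfolding G_def y_def using ik t tx by auto
  have fG: "finite G" unfolding G_def by auto
  define g where "g = Max G"
  have gG: "g \<in> G" unfolding g_def using fG iG Max_in by blast
  have ig: "i \<le> g" unfolding g_def using fG iG Max_ge by blast
  have gk: "g < k" and yg: "y < bx l k g" using gG unfolding G_def by auto
  have after: "bx l k g' < y" if "g < g'" "g' < k" for g'
  proof -
    have "g' \<notin> G" using that fG Max_ge g_def by (metis not_le)
    then have "bx l k g' \<le> y" using that unfolding G_def by auto
    moreover have "bx l k g' \<noteq> y" using ny that unfolding y_def beta_def by (metis imageI lessThan_iff)
    ultimately show ?thesis by auto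
  qed
  have ky: "k - 1 - g \<le> y"
  proof (cases "Suc g < k")
    case True
    then have "bx l k (Suc g) < y" using after by auto
    moreover have "k - 1 - Suc g \<le> bx l k (Suc g)" by (rule bx_ge)
    ultimately show ?thesis using True by linarith
  next
    case False then show ?thesis using gk by auto
  qed
  define j where "j = y - (k - 1 - g)"
  have jg: "j < pa l g" using yg ky unfolding j_def bx_def by linarith
  have sg: "pa l (Suc g) \<le> j"
  proof (cases "Suc g < k")
    case True
    then have "bx l k (Suc g) < y" using after by auto
    then show ?thesis using ky True unfolding j_def bx_def by linarith
  next
    case False
    then have "pa l (Suc g) = 0" using lk by (intro pa_zero) linarith
    then show ?thesis by simp
  qed
  have ji: "j < pa l i" using jg pa_antitone[OF pl ig] by linarith
  have cell: "(i, j) \<in> cells l" using ji unfolding cells_pa by auto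
  have "hook_length l i j = (pa l i - j - 1) + card {i<..g} + 1"
    using hook_pa[OF cell] leg_set[OF pl jg sg ig] by simp
  also have "\<dots> = t"
    using ji ig gk ky tx unfolding j_def y_def bx_def by simp
  finally show ?thesis using cell by blast
qed

lemma hook_to_gap:
  assumes pl: "is_partition l" and lk: "length l \<le> k"
    and cell: "(i, j) \<in> cells l" and h: "hook_length l i j = t"
  shows "\<exists>x\<in>beta k l. t \<le> x \<and> x - t \<notin> beta k l"
proof -
  define G where "G = {g. j < pa l g}"
  have ji: "j < pa l i" using cell unfolding cells_pa by auto
  have iG: "i \<in> G" unfolding G_def using ji by auto
  have Gsub: "G \<subseteq> {..<length l}" unfolding G_def using pa_pos[OF pl] by force
  have fG: "finite G" using Gsub finite_subset by blast
  define g where "g = Max G"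
  have gG: "g \<in> G" unfolding g_def using fG iG Max_in by blast
  have ig: "i \<le> g" unfolding g_def using fG iG Max_ge by blast
  have jg: "j < pa l g" using gG unfolding G_def by auto
  have gl: "g < length l" using gG Gsub by auto
  have sg: "pa l (Suc g) \<le> j"
  proof -
    have "Suc g \<notin> G" using fG Max_ge g_def by (metis Suc_n_not_le_n)
    then show ?thesis unfolding G_def by auto
  qed
  have ht: "t = (pa l i - j - 1) + (g - i) + 1"
    using hook_pa[OF cell] leg_set[OF pl jg sg ig] h by simp
  have ik: "i < k" using ig gl lk by linarith
  define x where "x = bx l k i"
  have xB: "x \<in> beta k l" unfolding x_def beta_def using ik by auto
  have tx: "t \<le> x" using ht ji ig gl lk unfolding x_def bx_def by linarith
  have yv: "x - t = j + (k - 1 - g)" using ht ji ig gl lk unfolding x_def bx_def by linarith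
  have "x - t \<notin> beta k l"
  proof
    assume "x - t \<in> beta k l"
    then obtain i' where i': "i' < k" "bx l k i' = x - t" unfolding beta_def by auto
    show False
    proof (cases "i' \<le> g")
      case True
      then have "pa l g \<le> pa l i'" by (rule pa_antitone[OF pl])
      then show ?thesis using i' yv jg True gl lk unfolding bx_def by linarith
    next
      case False
      then have "pa l i' \<le> pa l (Suc g)" using pa_antitone[OF pl] by auto
      then show ?thesis using i' yv sg False unfolding bx_def by linarith
    qed
  qed
  then show ?thesis using xB tx by blast
qed

lemma core_iff_closed:
  assumes pl: "is_partition l" and lk: "length l \<le> k" and t: "0 < t"
  shows "is_core t l \<longleftrightarrow> closed t (beta k l)"
proof
  assume c: "is_core t l"
  show "closed t (beta k l)" unfolding closed_def
  proof (intro ballI impI, rule ccontr)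
    fix x assume "x \<in> beta k l" "t \<le> x" "x - t \<notin> beta k l"
    then obtain i where "i < k" "x = bx l k i" unfolding beta_def by auto
    then show False using gap_to_hook[OF pl lk t] c \<open>t \<le> x\<close> \<open>x - t \<notin> beta k l\<close>
      unfolding is_core_def by blast
  qed
next
  assume c: "closed t (beta k l)"
  show "is_core t l" unfolding is_core_def
    using hook_to_gap[OF pl lk] c unfolding closed_def by blast
qed



lemma card_cells:
  assumes pl: "is_partition l" and lk: "length l \<le> k"
  shows "card (cells l) = (\<Sum>i<k. pa l i)"
proof -
  have h: "i < k" if "j < pa l i" for i j
  proof -
    have "0 < pa l i" using that by simp
    then show "i < k" using pa_pos[OF pl] lk by auto
  qed
  have "cells l = Sigma {..<k} (\<lambda>i. {..<pa l i})"
    unfolding cells_pa using h by auto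
  then show ?thesis by (simp add: card_SigmaI)
qed

lemma finite_cells: "finite (cells l)"
proof -
  have "cells l \<subseteq> {..<length l} \<times> {..<Max (insert 0 (set l))}"
    unfolding cells_def by (auto intro!: order.strict_trans2[OF _ Max_ge] nth_mem)
  then show ?thesis using finite_subset by blast
qed

lemma sum_beta:
  assumes pl: "is_partition l"
  shows "\<Sum>(beta k l) = (\<Sum>i<k. pa l i) + (\<Sum>i<k. k - 1 - i)"
proof -
  have "\<Sum>(beta k l) = (\<Sum>i<k. bx l k i)"
    using sum.reindex[OF bx_inj[OF pl], of "\<lambda>x. x"] unfolding beta_def by simp
  also have "\<dots> = (\<Sum>i<k. pa l i) + (\<Sum>i<k. k - 1 - i)"
    unfolding bx_def by (rule sum.distrib)
  finally show ?thesis .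
qed

lemma card_skew:
  assumes pl: "is_partition l" and lk: "length l \<le> k"
    and pm: "is_partition m" and sub: "cells m \<subseteq> cells l"
  shows "card (cells l - cells m) + \<Sum>(beta k m) = \<Sum>(beta k l)"
proof -
  have mk: "length m \<le> k"
  proof (rule ccontr)
    assume "\<not> length m \<le> k"
    then have "0 < pa m k" using pa_pos[OF pm] by auto
    then have "(k, 0) \<in> cells m" unfolding cells_pa by auto
    then have "(k, 0) \<in> cells l" using sub by auto
    then show False using pa_pos[OF pl, of k] lk unfolding cells_pa by auto
  qed
  have "card (cells l - cells m) = card (cells l) - card (cells m)"
    using sub finite_cells by (simp add: card_Diff_subset)
  moreover have "card (cells m) \<le> card (cells l)" using sub finite_cells card_mono by blast
  ultimately show ?thesis
    using card_cells[OF pl lk] card_cells[OF pm mk] sum_beta[OF pl, of k] sum_beta[OF pm, of k]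
    by simp
qed

lemma shape_beta:
  assumes pl: "is_partition l" and pm: "is_partition m"
    and pg: "p \<le> g" and gk: "g < k" and gpos: "0 < pa l g"
    and out: "\<And>i. i < p \<or> g < i \<Longrightarrow> pa m i = pa l i"
    and mid: "\<And>i. p \<le> i \<Longrightarrow> i < g \<Longrightarrow> pa m i = pa l (Suc i) - 1"
  shows "beta k m = insert (bx m k g) (beta k l - {bx l k p})"
proof -
  have eq_out: "bx m k i = bx l k i" if "i < p \<or> g < i" for i
    using out[OF that] unfolding bx_def by simp
  have eq_mid: "bx m k i = bx l k (Suc i)" if "p \<le> i" "i < g" for i
  proof -
    have "pa l g \<le> pa l (Suc i)" using pa_antitone[OF pl] that by auto
    then show ?thesis using mid[OF that] gpos that gk unfolding bx_def by simp
  qed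
  have inj: "inj_on (bx l k) {..<k}" by (rule bx_inj[OF pl])
  show ?thesis
  proof (intro set_eqI iffI)
    fix z assume "z \<in> beta k m"
    then obtain i where i: "i < k" "z = bx m k i" unfolding beta_def by auto
    consider "i < p \<or> g < i" | "p \<le> i \<and> i < g" | "i = g" by linarith
    then show "z \<in> insert (bx m k g) (beta k l - {bx l k p})"
    proof cases
      case 1
      then have "i \<noteq> p" using pg by auto
      then have "bx l k i \<noteq> bx l k p" using inj i pg gk unfolding inj_on_def by auto
      then show ?thesis using i eq_out[OF 1] unfolding beta_def by auto
    next
      case 2
      then have "Suc i \<noteq> p" "Suc i < k" using gk by auto
      then have "bx l k (Suc i) \<noteq> bx l k p" using inj i pg gk unfolding inj_on_def
        by (metis lessThan_iff order.strict_trans1)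
      then show ?thesis using i eq_mid 2 \<open>Suc i < k\<close> unfolding beta_def by auto
    qed (use i in auto)
  next
    fix z assume z: "z \<in> insert (bx m k g) (beta k l - {bx l k p})"
    show "z \<in> beta k m"
    proof (cases "z = bx m k g")
      case True then show ?thesis using gk unfolding beta_def by auto
    next
      case False
      then obtain i where i: "i < k" "z = bx l k i" "i \<noteq> p" using z unfolding beta_def by auto
      consider "i < p \<or> g < i" | "p < i \<and> i \<le> g" using i by linarith
      then show ?thesis
      proof cases
        case 1 then show ?thesis using i eq_out unfolding beta_def by force
      next
        case 2
        then have h1: "p \<le> i - 1" "i - 1 < g" "Suc (i - 1) = i" by auto
        have "bx m k (i - 1) = z" using eq_mid[OF h1(1,2)] h1(3) i by simp
        moreover have "i - 1 < k" using i by simp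
        ultimately show ?thesis unfolding beta_def by blast
      qed
    qed
  qed
qed

definition adjR :: "(nat \<times> nat) set \<Rightarrow> ((nat \<times> nat) \<times> (nat \<times> nat)) set" where
  "adjR S = {(c, d). c \<in> S \<and> d \<in> S \<and> adjacent_cell c d}"

lemma adjR_sym: "(adjR S)\<inverse> = adjR S"
  unfolding adjR_def adjacent_cell_def by auto

lemma row_path:
  assumes "\<And>c. c1 \<le> c \<Longrightarrow> c \<le> c2 \<Longrightarrow> (i, c) \<in> S" "c1 \<le> c2"
  shows "((i, c2), (i, c1)) \<in> (adjR S)\<^sup>*"
  using assms
proof (induction c2)
  case 0 then show ?case by simp
next
  case (Suc c2)
  show ?case
  proof (cases "c1 = Suc c2")
    case True then show ?thesis by simp
  next
    case False
    then have "((i, c2), (i, c1)) \<in> (adjR S)\<^sup>*" using Suc by auto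
    moreover have "((i, Suc c2), (i, c2)) \<in> adjR S"
      using Suc.prems False unfolding adjR_def adjacent_cell_def by auto
    ultimately show ?thesis by (meson converse_rtrancl_into_rtrancl)
  qed
qed

lemma conn_shape:
  assumes S: "S = {(i, c). p \<le> i \<and> i \<le> g \<and> lo i \<le> c \<and> c < hi i}"
    and pg: "p \<le> g" and ne: "\<And>i. p \<le> i \<Longrightarrow> i \<le> g \<Longrightarrow> lo i < hi i"
    and ov: "\<And>i. p \<le> i \<Longrightarrow> i < g \<Longrightarrow> lo (Suc i) \<le> lo i \<and> lo i < hi (Suc i)"
  shows "cells_connected S"
proof -
  have base: "(g, lo g) \<in> S" using S ne[OF pg] pg by auto
  have toBase: "((i, c), (g, lo g)) \<in> (adjR S)\<^sup>*" if "(i, c) \<in> S" for i c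
    using that
  proof (induction "g - i" arbitrary: i c)
    case 0
    then have "i = g" "lo g \<le> c" using S by auto
    then show ?case using row_path[of "lo g" c g S] S pg 0 by auto
  next
    case (Suc n)
    then have i: "p \<le> i" "i < g" "lo i \<le> c" "c < hi i" using S by auto
    have "((i, c), (i, lo i)) \<in> (adjR S)\<^sup>*"
      using row_path[of "lo i" c i S] S i by auto
    moreover have "((i, lo i), (Suc i, lo i)) \<in> adjR S"
      using ov[OF i(1,2)] ne[OF i(1)] i unfolding adjR_def adjacent_cell_def S by auto
    moreover have "((Suc i, lo i), (g, lo g)) \<in> (adjR S)\<^sup>*"
      using Suc(1)[of "Suc i" "lo i"] Suc(2) ov[OF i(1,2)] ne[OF i(1)] i S by auto
    ultimately show ?case by (meson converse_rtrancl_into_rtrancl rtrancl_trans)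
  qed
  show ?thesis unfolding cells_connected_def
  proof (intro conjI ballI)
    show "S \<noteq> {}" using base by auto
  next
    fix x y assume "x \<in> S" "y \<in> S"
    have "(x, (g, lo g)) \<in> (adjR S)\<^sup>*" using toBase \<open>x \<in> S\<close> by (cases x) auto
    moreover have "(y, (g, lo g)) \<in> (adjR S)\<^sup>*" using toBase \<open>y \<in> S\<close> by (cases y) auto
    then have "((g, lo g), y) \<in> (adjR S)\<^sup>*"
      using rtrancl_converseI[of y "(g, lo g)" "adjR S"] adjR_sym by simp
    ultimately show "(x, y) \<in> {(c, d). c \<in> S \<and> d \<in> S \<and> adjacent_cell c d}\<^sup>*"
      unfolding adjR_def by (meson rtrancl_trans)
  qed
qed



lemma gap_to_rim:
  assumes pl: "is_partition l" and lk: "length l \<le> k" and t: "0 < t"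
    and pk: "p < k" and tx: "t \<le> bx l k p" and ny: "bx l k p - t \<notin> beta k l"
  shows "\<exists>m. remove_rim_hook t l m \<and>
           beta k m = insert (bx l k p - t) (beta k l - {bx l k p})"
proof -
  define x where "x = bx l k p"
  define y where "y = x - t"
  define G where "G = {g. g < k \<and> y < bx l k g}"
  have iG: "p \<in> G" unfolding G_def y_def x_def using pk t tx by auto
  have fG: "finite G" unfolding G_def by auto
  define g where "g = Max G"
  have gG: "g \<in> G" unfolding g_def using fG iG Max_in by blast
  have pg: "p \<le> g" unfolding g_def using fG iG Max_ge by blast
  have gk: "g < k" and yg: "y < bx l k g" using gG unfolding G_def by auto
  have after: "bx l k g' < y" if "g < g'" "g' < k" for g'
  proof -
    have "g' \<notin> G" using that fG Max_ge g_def by (metis not_le)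
    then have "bx l k g' \<le> y" using that unfolding G_def by auto
    moreover have "bx l k g' \<noteq> y" using ny that unfolding y_def x_def beta_def
      by (metis imageI lessThan_iff)
    ultimately show ?thesis by auto
  qed
  have ky: "k - 1 - g \<le> y"
  proof (cases "Suc g < k")
    case True
    then have "bx l k (Suc g) < y" using after by auto
    moreover have "k - 1 - Suc g \<le> bx l k (Suc g)" by (rule bx_ge)
    ultimately show ?thesis using True by linarith
  next
    case False then show ?thesis using gk by auto
  qed
  define j where "j = y - (k - 1 - g)"
  have jg: "j < pa l g" using yg ky unfolding j_def bx_def by linarith
  have sg: "pa l (Suc g) \<le> j"
  proof (cases "Suc g < k")
    case True
    then have "bx l k (Suc g) < y" using after by auto
    then show ?thesis using ky True unfolding j_def bx_def by linarith
  next
    case False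
    then have "pa l (Suc g) = 0" using lk by (intro pa_zero) linarith
    then show ?thesis by simp
  qed
  have anti: "\<And>i i'. i \<le> i' \<Longrightarrow> pa l i' \<le> pa l i" using pa_antitone[OF pl] by blast
  have posmid: "0 < pa l i" if "i \<le> g" for i using anti[OF that] jg by linarith
  define f where "f i = (if i < p \<or> g < i then pa l i else if i < g then pa l (Suc i) - 1 else j)" for i
  have fle: "f i \<le> pa l i" for i
    unfolding f_def using anti[of i "Suc i"] jg by auto
  have fsuc: "f (Suc i) \<le> f i" for i
  proof -
    consider "Suc i < p" | "Suc i = p" | "p \<le> i \<and> Suc i < g" | "p \<le> i \<and> Suc i = g"
      | "i = g" | "g < i" using pg by linarith
    then show ?thesis
    proof cases
      case 1 then show ?thesis unfolding f_def using anti[of i "Suc i"] by auto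
    next
      case 2
      have "f (Suc i) \<le> pa l (Suc i)" by (rule fle)
      moreover have "pa l (Suc i) \<le> pa l i" by (rule anti) simp
      moreover have "f i = pa l i" unfolding f_def using 2 by auto
      ultimately show ?thesis by linarith
    next
      case 3 then show ?thesis unfolding f_def using anti[of "Suc i" "Suc (Suc i)"] by auto
    next
      case 4 then show ?thesis unfolding f_def using jg by auto
    next
      case 5 then show ?thesis unfolding f_def using sg pg by auto
    next
      case 6 then show ?thesis unfolding f_def using anti[of i "Suc i"] by auto
    qed
  qed
  have fanti: "f i' \<le> f i" if "i \<le> i'" for i i'
    using that fsuc by (metis decseq_Suc_iff decseqD)
  have fk: "f k = 0" unfolding f_def using gk pa_zero[of l k] lk by auto
  define m where "m = mkp f"
  have pm: "is_partition m" and pam: "pa m = f"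
    unfolding m_def using mkp[of f k, OF fanti fk] by auto
  have beq: "beta k m = insert (bx m k g) (beta k l - {bx l k p})"
  proof (rule shape_beta[OF pl pm pg gk posmid[OF order.refl]])
    show "\<And>i. i < p \<or> g < i \<Longrightarrow> pa m i = pa l i" unfolding pam f_def by auto
    show "\<And>i. p \<le> i \<Longrightarrow> i < g \<Longrightarrow> pa m i = pa l (Suc i) - 1" unfolding pam f_def by auto
  qed
  have bmg: "bx m k g = y" unfolding bx_def pam f_def j_def using ky pg by auto
  have sub: "cells m \<subseteq> cells l" unfolding cells_pa pam using fle
    by (auto intro: order.strict_trans2)
  have S: "cells l - cells m = {(i, c). p \<le> i \<and> i \<le> g \<and> f i \<le> c \<and> c < pa l i}"
    unfolding cells_pa pam by (auto simp: f_def not_less split: if_splits)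
  have xB: "x \<in> beta k l" unfolding x_def beta_def using pk by auto
  have fin: "finite (beta k l)" using beta_card[OF pl] by auto
  have yn: "y \<notin> beta k l - {x}" using ny unfolding y_def x_def by auto
  have s1: "\<Sum>(beta k m) = y + \<Sum>(beta k l - {x})"
    unfolding beq bmg x_def[symmetric] using fin yn by simp
  have s2: "\<Sum>(beta k l) = x + \<Sum>(beta k l - {x})"
    using fin xB by (simp add: sum.remove)
  have cardS: "card (cells l - cells m) = t"
    using card_skew[OF pl lk pm sub] s1 s2 tx unfolding y_def x_def by linarith
  have conn: "cells_connected (cells l - cells m)"
  proof (rule conn_shape[OF S pg])
    show "f i < pa l i" if "p \<le> i" "i \<le> g" for i
    proof (cases "i < g")
      case True
      then have "0 < pa l (Suc i)" using posmid by auto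
      then show ?thesis unfolding f_def using True that anti[of i "Suc i"] by auto
    next
      case False then show ?thesis unfolding f_def using that jg by auto
    qed
    show "f (Suc i) \<le> f i \<and> f i < pa l (Suc i)" if "p \<le> i" "i < g" for i
      using fsuc[of i] posmid[of "Suc i"] that unfolding f_def by auto
  qed
  have no2: "no_2x2 (cells l - cells m)"
    unfolding no_2x2_def S
  proof clarify
    fix i c
    assume h: "p \<le> i" "i \<le> g" "f i \<le> c" "c < pa l i" "p \<le> i + 1" "i + 1 \<le> g"
      "f (i + 1) \<le> c" "c < pa l (i + 1)" "f i \<le> c + 1" "c + 1 < pa l i"
      "f (i + 1) \<le> c + 1" "c + 1 < pa l (i + 1)"
    then have "f i = pa l (Suc i) - 1" unfolding f_def by auto
    then show False using h by auto
  qed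
  have "remove_rim_hook t l m"
    unfolding remove_rim_hook_def using pm sub cardS conn no2 by auto
  moreover have "beta k m = insert (bx l k p - t) (beta k l - {bx l k p})"
    using beq bmg unfolding y_def x_def by simp
  ultimately show ?thesis by blast
qed



lemma rim_to_gap:
  assumes pl: "is_partition l" and lk: "length l \<le> k" and r: "remove_rim_hook t l m"
  shows "\<exists>x\<in>beta k l. t \<le> x \<and> x - t \<notin> beta k l - {x} \<and>
           beta k m = insert (x - t) (beta k l - {x})"
proof -
  have pm: "is_partition m" and sub: "cells m \<subseteq> cells l"
    and cardS: "card (cells l - cells m) = t"
    and conn: "cells_connected (cells l - cells m)" and no2: "no_2x2 (cells l - cells m)"
    using r unfolding remove_rim_hook_def by auto
  have anti: "\<And>i i'. i \<le> i' \<Longrightarrow> pa l i' \<le> pa l i" using pa_antitone[OF pl] by blast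
  have antim: "\<And>i i'. i \<le> i' \<Longrightarrow> pa m i' \<le> pa m i" using pa_antitone[OF pm] by blast
  have le: "pa m i \<le> pa l i" for i
  proof (rule ccontr)
    assume "\<not> pa m i \<le> pa l i"
    then have "(i, pa l i) \<in> cells m" unfolding cells_pa by auto
    then show False using sub unfolding cells_pa by auto
  qed
  define S where "S = cells l - cells m"
  have S: "S = {(i, c). pa m i \<le> c \<and> c < pa l i}" unfolding S_def cells_pa by auto
  define Rw where "Rw = {i. pa m i < pa l i}"
  have Rwsub: "Rw \<subseteq> {..<length l}" unfolding Rw_def using pa_pos[OF pl] by force
  have fRw: "finite Rw" using Rwsub finite_subset by blast
  have "S \<noteq> {}" using conn unfolding cells_connected_def S_def by auto
  then obtain i0 c0 where "(i0, c0) \<in> S" by auto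
  then have i0: "i0 \<in> Rw" unfolding S Rw_def by auto
  define p where "p = Min Rw"
  define g where "g = Max Rw"
  have pR: "p \<in> Rw" and gR: "g \<in> Rw" unfolding p_def g_def using fRw i0 Min_in Max_in by blast+
  have pg: "p \<le> g" unfolding p_def g_def using fRw i0 by (meson Max_ge Min_le order.trans)
  have gk: "g < k" using gR Rwsub lk by auto
  have outside: "pa m i = pa l i" if "i < p \<or> g < i" for i
  proof -
    have "i \<notin> Rw" using that fRw unfolding p_def g_def
      by (meson Max_ge Min_le not_le)
    then show ?thesis using le[of i] unfolding Rw_def by auto
  qed
  have nsq: "pa l (Suc i) \<le> pa m i + 1" for i
  proof (rule ccontr)
    assume h: "\<not> pa l (Suc i) \<le> pa m i + 1"
    let ?c = "pa m i"
    have "pa l (Suc i) \<le> pa l i" by (rule anti) simp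
    moreover have "pa m (Suc i) \<le> pa m i" by (rule antim) simp
    ultimately have "(i, ?c) \<in> S \<and> (i + 1, ?c) \<in> S \<and> (i, ?c + 1) \<in> S \<and> (i + 1, ?c + 1) \<in> S"
      using h unfolding S by auto
    then show False using no2 unfolding no_2x2_def S_def by blast
  qed
  have ovl: "pa m i < pa l (Suc i)" if "p \<le> i" "i < g" for i
  proof (rule ccontr)
    assume h: "\<not> pa m i < pa l (Suc i)"
    define A where "A = {u \<in> S. fst u \<le> i}"
    have step: "v \<in> A" if "u \<in> A" "(u, v) \<in> adjR S" for u v
    proof (rule ccontr)
      assume "v \<notin> A"
      then have "v \<in> S" "i < fst v" using that(2) unfolding A_def adjR_def by auto
      moreover have "u \<in> S" "fst u \<le> i" using that(1) unfolding A_def by auto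
      moreover have "adjacent_cell u v" using that(2) unfolding adjR_def by auto
      ultimately have "fst v = Suc i" "fst u = i" "snd u = snd v"
        unfolding adjacent_cell_def by auto
      then show False using \<open>u \<in> S\<close> \<open>v \<in> S\<close> h unfolding S
        by (cases u; cases v) auto
    qed
    have a0: "(p, pa m p) \<in> A" using pR that unfolding A_def S Rw_def by auto
    have g0: "(g, pa m g) \<in> S" using gR unfolding S Rw_def by auto
    have "((p, pa m p), (g, pa m g)) \<in> (adjR S)\<^sup>*"
      using conn a0 g0 unfolding cells_connected_def adjR_def S_def A_def by auto
    then have "(g, pa m g) \<in> A"
      by (induction rule: rtrancl_induct) (use a0 step in auto)
    then show False using that unfolding A_def by auto
  qed
  have mid: "pa m i = pa l (Suc i) - 1" if "p \<le> i" "i < g" for i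
    using nsq[of i] ovl[OF that] by linarith
  have gpos: "0 < pa l g" using gR unfolding Rw_def by auto
  have beq: "beta k m = insert (bx m k g) (beta k l - {bx l k p})"
    by (rule shape_beta[OF pl pm pg gk gpos outside mid])
  define x where "x = bx l k p"
  define y where "y = bx m k g"
  have xB: "x \<in> beta k l" unfolding x_def beta_def using pg gk by auto
  have fin: "finite (beta k l)" and cB: "card (beta k l) = k" using beta_card[OF pl] by auto
  have yn: "y \<notin> beta k l - {x}"
  proof
    assume "y \<in> beta k l - {x}"
    then have "beta k m = beta k l - {x}" using beq unfolding x_def y_def by auto
    then have "card (beta k m) = k - 1" using cB xB fin by simp
    then show False using beta_card[OF pm, of k] gk by simp
  qed
  have s1: "\<Sum>(beta k m) = y + \<Sum>(beta k l - {x})"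
    unfolding beq y_def[symmetric] x_def[symmetric] using fin yn by simp
  have s2: "\<Sum>(beta k l) = x + \<Sum>(beta k l - {x})"
    using fin xB by (simp add: sum.remove)
  have "t + y = x" using card_skew[OF pl lk pm sub] s1 s2 cardS by linarith
  then have "t \<le> x" "y = x - t" by auto
  then show ?thesis using xB yn beq unfolding x_def[symmetric] y_def[symmetric] by auto
qed



definition cnt :: "nat \<Rightarrow> nat \<Rightarrow> nat set \<Rightarrow> nat" where
  "cnt t s B = card {x\<in>B. x mod t = s}"

definition Sset :: "nat \<Rightarrow> (nat \<Rightarrow> nat) \<Rightarrow> nat set" where
  "Sset t c = {x. x div t < c (x mod t)}"

lemma cnt_move:
  assumes fin: "finite B" and xB: "x \<in> B" and yn: "y \<notin> B - {x}" and ym: "y mod t = x mod t"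
  shows "cnt t s (insert y (B - {x})) = cnt t s B"
proof -
  have fin2: "finite {z \<in> B - {x}. z mod t = s}" using fin by auto
  have yn2: "y \<notin> {z \<in> B - {x}. z mod t = s}" using yn by auto
  show ?thesis
  proof (cases "x mod t = s")
    case True
    have e1: "{z \<in> insert y (B - {x}). z mod t = s} = insert y {z \<in> B - {x}. z mod t = s}"
      using True ym by auto
    have e2: "{z \<in> B. z mod t = s} = insert x {z \<in> B - {x}. z mod t = s}"
      using True xB by auto
    show ?thesis unfolding cnt_def e1 e2 using fin2 yn2 by simp
  next
    case False
    have "{z \<in> insert y (B - {x}). z mod t = s} = {z \<in> B. z mod t = s}"
      using False ym by auto
    then show ?thesis unfolding cnt_def by simp
  qed
qed

lemma downclosed_eq:
  assumes "finite J" and dc: "\<And>j i. j \<in> J \<Longrightarrow> i \<le> j \<Longrightarrow> i \<in> J"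
  shows "J = {..<card J}"
proof -
  have "J \<subseteq> {..<card J}"
  proof
    fix j assume "j \<in> J"
    then have "{..j} \<subseteq> J" using dc by auto
    then have "card {..j} \<le> card J" using assms(1) card_mono by blast
    then show "j \<in> {..<card J}" by simp
  qed
  then show ?thesis using card_subset_eq[of "{..<card J}" J] by simp
qed

lemma closed_Sset:
  assumes t: "0 < t" and cl: "closed t B" and fin: "finite B"
  shows "B = Sset t (\<lambda>s. cnt t s B)"
proof (intro set_eqI)
  fix x
  define s where "s = x mod t"
  define J where "J = {j. s + t * j \<in> B}"
  have st: "s < t" unfolding s_def using t by simp
  have bij: "bij_betw (\<lambda>j. s + t * j) J {z\<in>B. z mod t = s}"
  proof (rule bij_betwI')
    show "\<And>a b. a \<in> J \<Longrightarrow> b \<in> J \<Longrightarrow> (s + t * a = s + t * b) = (a = b)" using t by auto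
    show "\<And>a. a \<in> J \<Longrightarrow> s + t * a \<in> {z \<in> B. z mod t = s}" unfolding J_def using st by auto
    fix z assume "z \<in> {z \<in> B. z mod t = s}"
    then have zB: "z \<in> B" and zs: "z mod t = s" by auto
    have e: "s + t * (z div t) = z" using zs
      by (metis add.commute mult.commute div_mult_mod_eq)
    have "z div t \<in> J" unfolding J_def using zB e by simp
    then show "\<exists>a\<in>J. z = s + t * a" using e by metis
  qed
  have cJ: "cnt t s B = card J" unfolding cnt_def using bij_betw_same_card[OF bij] by simp
  have fJ: "finite J"
  proof -
    have "finite {z\<in>B. z mod t = s}" using fin by auto
    then show ?thesis using bij_betw_finite[OF bij] by simp
  qed
  have dc: "i \<in> J" if "j \<in> J" "i \<le> j" for j i
    using that
  proof (induction "j - i" arbitrary: j)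
    case 0 then show ?case by simp
  next
    case (Suc n)
    then have "1 \<le> j" by linarith
    then have "t * 1 \<le> t * j" by (rule mult_le_mono2)
    then have "t \<le> s + t * j" by linarith
    then have "s + t * j - t \<in> B" using cl Suc.prems unfolding closed_def J_def by auto
    moreover have "s + t * j - t = s + t * (j - 1)"
      using \<open>t * 1 \<le> t * j\<close> by (simp add: diff_mult_distrib2)
    ultimately have "j - 1 \<in> J" unfolding J_def by simp
    then show ?case using Suc by (intro Suc(1)[of "j - 1"]) auto
  qed
  have Jeq: "J = {..<card J}" by (rule downclosed_eq[OF fJ dc])
  have xe: "x = s + t * (x div t)" unfolding s_def by (metis add.commute mult.commute div_mult_mod_eq)
  have "x \<in> B \<longleftrightarrow> x div t \<in> J" unfolding J_def using xe by auto
  also have "\<dots> \<longleftrightarrow> x div t < card J" using Jeq by (metis lessThan_iff)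
  finally show "x \<in> B \<longleftrightarrow> x \<in> Sset t (\<lambda>s. cnt t s B)"
    unfolding Sset_def using cJ unfolding s_def by simp
qed

lemma Sset_closed:
  assumes t: "0 < t"
  shows "closed t (Sset t c)"
  unfolding closed_def Sset_def
proof (intro ballI impI, simp)
  fix x assume "x div t < c (x mod t)" "t \<le> x"
  moreover have "(x - t) mod t = x mod t" using \<open>t \<le> x\<close> by (simp add: le_mod_geq)
  moreover have "(x - t) div t = x div t - 1" using \<open>t \<le> x\<close> t by (simp add: le_div_geq)
  ultimately show "(x - t) div t < c ((x - t) mod t)" by simp
qed

lemma Sset_UN:
  assumes t: "0 < t"
  shows "Sset t c = (\<Union>s<t. (\<lambda>j. s + t * j) ` {..<c s})"
proof (intro set_eqI iffI)
  fix x assume "x \<in> Sset t c"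
  then have "x div t < c (x mod t)" unfolding Sset_def by simp
  moreover have "x = x mod t + t * (x div t)" by simp
  moreover have "x mod t < t" using t by simp
  ultimately show "x \<in> (\<Union>s<t. (\<lambda>j. s + t * j) ` {..<c s})" by blast
next
  fix x assume "x \<in> (\<Union>s<t. (\<lambda>j. s + t * j) ` {..<c s})"
  then obtain s j where "s < t" "j < c s" "x = s + t * j" by auto
  then show "x \<in> Sset t c" unfolding Sset_def by simp
qed

lemma Sset_finite:
  assumes t: "0 < t"
  shows "finite (Sset t c)"
  using Sset_UN[OF t] by simp

lemma cnt_Sset:
  assumes t: "0 < t" and st: "s < t"
  shows "cnt t s (Sset t c) = c s"
proof -
  have "{x \<in> Sset t c. x mod t = s} = (\<lambda>j. s + t * j) ` {..<c s}"
  proof (intro set_eqI iffI)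
    fix x assume "x \<in> {x \<in> Sset t c. x mod t = s}"
    then have "x div t < c s" "x mod t = s" unfolding Sset_def by auto
    moreover have "x = x mod t + t * (x div t)" by simp
    ultimately show "x \<in> (\<lambda>j. s + t * j) ` {..<c s}" by auto
  next
    fix x assume "x \<in> (\<lambda>j. s + t * j) ` {..<c s}"
    then obtain j where "j < c s" "x = s + t * j" by auto
    then show "x \<in> {x \<in> Sset t c. x mod t = s}" unfolding Sset_def using st by auto
  qed
  moreover have "inj_on (\<lambda>j. s + t * j) {..<c s}" using t unfolding inj_on_def by auto
  ultimately show ?thesis unfolding cnt_def by (simp add: card_image)
qed

lemma card_cnt:
  assumes t: "0 < t" and fin: "finite B"
  shows "card B = (\<Sum>s<t. cnt t s B)"
proof -
  have "B = (\<Union>s<t. {x\<in>B. x mod t = s})" using t by auto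
  then have "card B = card (\<Union>s<t. {x\<in>B. x mod t = s})" by simp
  also have "\<dots> = (\<Sum>s<t. card {x\<in>B. x mod t = s})"
    by (rule card_UN_disjoint) (use fin in auto)
  finally show ?thesis unfolding cnt_def .
qed

lemma cnt_refine:
  assumes b: "0 < b" and fin: "finite B" and rb: "r < b" and q0: "0 < q"
  shows "cnt b r B = (\<Sum>j<q. cnt (q * b) (r + b * j) B)"
proof -
  have e: "{x\<in>B. x mod b = r} = (\<Union>j<q. {x\<in>B. x mod (q * b) = r + b * j})"
  proof (intro set_eqI iffI)
    fix x assume x: "x \<in> {x\<in>B. x mod b = r}"
    define s where "s = x mod (q * b)"
    have "s mod b = r" unfolding s_def using x by (simp add: mod_mod_cancel)
    then have "s = r + b * (s div b)" by (metis add.commute mult.commute div_mult_mod_eq)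
    moreover have "s div b < q" unfolding s_def using b q0
      by (metis div_eq_0_iff less_mult_imp_div_less mod_less_divisor mult_pos_pos not_gr_zero mult.commute)
    ultimately show "x \<in> (\<Union>j<q. {x\<in>B. x mod (q * b) = r + b * j})" using x unfolding s_def by auto
  next
    fix x assume "x \<in> (\<Union>j<q. {x\<in>B. x mod (q * b) = r + b * j})"
    then obtain j where "x \<in> B" "x mod (q * b) = r + b * j" by auto
    moreover have "x mod b = (x mod (q * b)) mod b" by (simp add: mod_mod_cancel)
    ultimately show "x \<in> {x\<in>B. x mod b = r}" using rb by simp
  qed
  have "card (\<Union>j<q. {x\<in>B. x mod (q * b) = r + b * j}) =
          (\<Sum>j<q. card {x\<in>B. x mod (q * b) = r + b * j})"
      by (rule card_UN_disjoint) (use fin b in auto)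
  then show ?thesis unfolding cnt_def e .
qed



lemma len_sub:
  assumes pl: "is_partition l" and pm: "is_partition m" and sub: "cells m \<subseteq> cells l"
  shows "length m \<le> length l"
proof (rule ccontr)
  assume "\<not> length m \<le> length l"
  then have "0 < pa m (length l)" using pa_pos[OF pm] by auto
  then have "(length l, 0) \<in> cells m" unfolding cells_pa by auto
  then have "(length l, 0) \<in> cells l" using sub by auto
  then show False using pa_pos[OF pl, of "length l"] unfolding cells_pa by auto
qed

lemma above_card:
  assumes pl: "is_partition l" and ik: "i < k"
  shows "card {y \<in> beta k l. bx l k i < y} = i"
proof -
  have "{y \<in> beta k l. bx l k i < y} = bx l k ` {..<i}"
  proof (intro set_eqI iffI)
    fix y assume "y \<in> {y \<in> beta k l. bx l k i < y}"
    then obtain i' where "i' < k" "y = bx l k i'" "bx l k i < bx l k i'" unfolding beta_def by auto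
    then have "i' < i" using bx_mono_iff[OF pl \<open>i' < k\<close> ik] by auto
    then show "y \<in> bx l k ` {..<i}" using \<open>y = bx l k i'\<close> by auto
  next
    fix y assume "y \<in> bx l k ` {..<i}"
    then obtain i' where "i' < i" "y = bx l k i'" by auto
    then show "y \<in> {y \<in> beta k l. bx l k i < y}"
      using bx_strict[OF pl \<open>i' < i\<close> ik] ik unfolding beta_def by auto
  qed
  moreover have "inj_on (bx l k) {..<i}"
    using inj_on_subset[OF bx_inj[OF pl, of k], of "{..<i}"] ik by auto
  ultimately show ?thesis by (simp add: card_image)
qed

lemma beta_inj:
  assumes p1: "is_partition l1" and p2: "is_partition l2"
    and k1: "length l1 \<le> k" and k2: "length l2 \<le> k" and eq: "beta k l1 = beta k l2"
  shows "l1 = l2"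
proof (rule part_eq[OF p1 p2], rule ext)
  fix i
  show "pa l1 i = pa l2 i"
  proof (cases "i < k")
    case True
    have "bx l1 k i \<in> beta k l2" using eq True unfolding beta_def by auto
    then obtain i' where i': "i' < k" "bx l1 k i = bx l2 k i'" unfolding beta_def by auto
    have "i = i'" using above_card[OF p1 True] above_card[OF p2 i'(1)] eq i'(2) by simp
    then show ?thesis using i' unfolding bx_def by simp
  next
    case False
    then show ?thesis using pa_zero[of l1 i] pa_zero[of l2 i] k1 k2 by simp
  qed
qed

lemma reach_inv:
  assumes r: "(remove_rim_hook t)\<^sup>*\<^sup>* l m" and pl: "is_partition l" and lk: "length l \<le> k"
  shows "is_partition m \<and> length m \<le> k \<and> (\<forall>s. cnt t s (beta k m) = cnt t s (beta k l))"
  using r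
proof (induction rule: rtranclp_induct)
  case base then show ?case using pl lk by simp
next
  case (step m m')
  then have pm: "is_partition m" and mk: "length m \<le> k" by auto
  have pm': "is_partition m'" and sub: "cells m' \<subseteq> cells m"
    using step(2) unfolding remove_rim_hook_def by auto
  obtain x where x: "x \<in> beta k m" "t \<le> x" "x - t \<notin> beta k m - {x}"
    "beta k m' = insert (x - t) (beta k m - {x})"
    using rim_to_gap[OF pm mk step(2)] by blast
  have "(x - t) mod t = x mod t" using x(2) by (simp add: le_mod_geq)
  then have "cnt t s (beta k m') = cnt t s (beta k m)" for s
    unfolding x(4) using cnt_move[OF beta_card(2)[OF pm] x(1) x(3)] by blast
  moreover have "length m' \<le> k" using len_sub[OF pm pm' sub] mk by simp
  ultimately show ?case using step pm' by simp
qed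

lemma core_exists:
  assumes t: "0 < t" and pl: "is_partition l"
  shows "\<exists>m. (remove_rim_hook t)\<^sup>*\<^sup>* l m \<and> is_core t m"
  using pl
proof (induction "card (cells l)" arbitrary: l rule: less_induct)
  case less
  show ?case
  proof (cases "is_core t l")
    case True then show ?thesis by blast
  next
    case False
    define k where "k = length l"
    have "\<not> closed t (beta k l)" using core_iff_closed[OF less.prems _ t, of k] False
      unfolding k_def by simp
    then obtain x where x: "x \<in> beta k l" "t \<le> x" "x - t \<notin> beta k l"
      unfolding closed_def by blast
    then obtain p where p: "p < k" "x = bx l k p" unfolding beta_def by auto
    obtain m' where m': "remove_rim_hook t l m'"
      using gap_to_rim[OF less.prems _ t p(1)] x p unfolding k_def by blast
    have pm': "is_partition m'" and sub: "cells m' \<subseteq> cells l"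
      and cS: "card (cells l - cells m') = t"
      using m' unfolding remove_rim_hook_def by auto
    have "card (cells l - cells m') = card (cells l) - card (cells m')"
      using sub finite_cells by (simp add: card_Diff_subset)
    moreover have "card (cells m') \<le> card (cells l)" using sub finite_cells card_mono by blast
    ultimately have "card (cells m') < card (cells l)" using cS t by linarith
    then obtain m where "(remove_rim_hook t)\<^sup>*\<^sup>* m' m" "is_core t m"
      using less.hyps pm' by blast
    then show ?thesis using converse_rtranclp_into_rtranclp[of "remove_rim_hook t" l m' m] m' by blast
  qed
qed

lemma core_char:
  assumes t: "0 < t" and pl: "is_partition l" and lk: "length l \<le> k"
  shows "is_partition (core t l) \<and> is_core t (core t l) \<and> length (core t l) \<le> k \<and>
         beta k (core t l) = Sset t (\<lambda>s. cnt t s (beta k l))"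
proof -
  have good: "is_partition m \<and> length m \<le> k \<and> beta k m = Sset t (\<lambda>s. cnt t s (beta k l))"
    if "(remove_rim_hook t)\<^sup>*\<^sup>* l m" "is_core t m" for m
  proof -
    have inv: "is_partition m" "length m \<le> k" "\<And>s. cnt t s (beta k m) = cnt t s (beta k l)"
      using reach_inv[OF that(1) pl lk] by auto
    have "closed t (beta k m)" using core_iff_closed[OF inv(1,2) t] that(2) by simp
    then have "beta k m = Sset t (\<lambda>s. cnt t s (beta k m))"
      using closed_Sset[OF t] beta_card(2)[OF inv(1)] by blast
    then show ?thesis using inv by simp
  qed
  obtain m0 where m0: "(remove_rim_hook t)\<^sup>*\<^sup>* l m0" "is_core t m0" using core_exists[OF t pl] by blast
  have uniq: "m = m0" if "(remove_rim_hook t)\<^sup>*\<^sup>* l m \<and> is_core t m" for m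
  proof -
    have g1: "is_partition m" "length m \<le> k" "beta k m = Sset t (\<lambda>s. cnt t s (beta k l))"
      using good[of m] that by blast+
    have g0: "is_partition m0" "length m0 \<le> k" "beta k m0 = Sset t (\<lambda>s. cnt t s (beta k l))"
      using good[OF m0] by blast+
    show ?thesis using beta_inj[OF g1(1) g0(1) g1(2) g0(2)] g1(3) g0(3) by simp
  qed
  have "core t l = m0" unfolding core_def
  proof (rule the_equality)
    show "(remove_rim_hook t)\<^sup>*\<^sup>* l m0 \<and> is_core t m0" using m0 by blast
    show "\<And>m. (remove_rim_hook t)\<^sup>*\<^sup>* l m \<and> is_core t m \<Longrightarrow> m = m0" by (rule uniq)
  qed
  then show ?thesis using good[OF m0] m0 by simp
qed




lemma beta_surj:
  assumes "finite B" "card B = k"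
  shows "\<exists>lam. is_partition lam \<and> length lam \<le> k \<and> beta k lam = B"
  using assms
proof (induction k arbitrary: B)
  case 0
  then have "B = {}" by simp
  then show ?case by (intro exI[of _ "[]"]) (simp add: is_partition_def beta_def)
next
  case (Suc k)
  have ne: "B \<noteq> {}" using Suc.prems by auto
  define M where "M = Max B"
  have MB: "M \<in> B" unfolding M_def using Max_in Suc.prems ne by blast
  define B' where "B' = B - {M}"
  have fB': "finite B'" "card B' = k" unfolding B'_def using Suc.prems MB by auto
  obtain l' where l': "is_partition l'" "length l' \<le> k" "beta k l' = B'"
    using Suc.IH[OF fB'] by blast
  have ltM: "y < M" if "y \<in> B'" for y
    using that Suc.prems Max_ge unfolding B'_def M_def by fastforce
  have pa0: "pa l' 0 + k \<le> M \<and> k \<le> M"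
  proof (cases "k = 0")
    case True
    then show ?thesis using pa_zero[of l' 0] l'(2) by simp
  next
    case False
    then have "bx l' k 0 \<in> B'" using l'(3) unfolding beta_def by auto
    then have "bx l' k 0 < M" by (rule ltM)
    then show ?thesis using False unfolding bx_def by linarith
  qed
  define f where "f i = (if i = 0 then M - k else pa l' (i - 1))" for i
  have fsuc: "f (Suc i) \<le> f i" for i
  proof (cases i)
    case 0 then show ?thesis unfolding f_def using pa0 by (simp add: le_diff_conv2)
  next
    case (Suc i') then show ?thesis unfolding f_def using pa_antitone[OF l'(1), of i' "Suc i'"] by simp
  qed
  have fanti: "f i' \<le> f i" if "i \<le> i'" for i i'
    using that fsuc by (metis decseq_Suc_iff decseqD)
  have fk: "f (Suc k) = 0" unfolding f_def using pa_zero[of l' k] l'(2) by simp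
  define lam where "lam = mkp f"
  have pl: "is_partition lam" "pa lam = f" "length lam \<le> Suc k"
    unfolding lam_def using mkp[of f "Suc k", OF fanti fk] by auto
  have "beta (Suc k) lam = insert (bx lam (Suc k) 0) ((\<lambda>i. bx lam (Suc k) (Suc i)) ` {..<k})"
    unfolding beta_def lessThan_Suc_eq_insert_0 by (simp add: image_image)
  also have "bx lam (Suc k) 0 = M" unfolding bx_def pl(2) f_def using pa0 by simp
  also have "(\<lambda>i. bx lam (Suc k) (Suc i)) ` {..<k} = bx l' k ` {..<k}"
    by (rule image_cong) (auto simp: bx_def pl(2) f_def)
  also have "\<dots> = B'" using l'(3) unfolding beta_def .
  finally have "beta (Suc k) lam = B" unfolding B'_def using MB by auto
  then show ?case using pl by blast
qed

lemma Sset_cong: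
  assumes "\<And>s. s < t \<Longrightarrow> c1 s = c2 s" "0 < t"
  shows "Sset t c1 = Sset t c2"
  unfolding Sset_def using assms by auto

lemma core_b_iff:
  assumes b: "0 < b" and pl: "is_partition lam" and lk: "length lam \<le> k"
    and ps: "is_partition sigma" and cs: "is_core b sigma" and sk: "length sigma \<le> k"
  shows "core b lam = sigma \<longleftrightarrow> (\<forall>r<b. cnt b r (beta k lam) = cnt b r (beta k sigma))"
proof -
  have cc: "is_partition (core b lam)" "length (core b lam) \<le> k"
    "beta k (core b lam) = Sset b (\<lambda>s. cnt b s (beta k lam))"
    using core_char[OF b pl lk] by auto
  have sc: "beta k sigma = Sset b (\<lambda>s. cnt b s (beta k sigma))"
    using closed_Sset[OF b] core_iff_closed[OF ps sk b] cs beta_card(2)[OF ps] by blast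
  show ?thesis
  proof
    assume "core b lam = sigma"
    then have "beta k sigma = Sset b (\<lambda>s. cnt b s (beta k lam))" using cc by simp
    then show "\<forall>r<b. cnt b r (beta k lam) = cnt b r (beta k sigma)"
      using cnt_Sset[OF b] by simp
  next
    assume h: "\<forall>r<b. cnt b r (beta k lam) = cnt b r (beta k sigma)"
    have "beta k (core b lam) = beta k sigma"
      unfolding cc(3) by (subst sc) (rule Sset_cong, use h b in auto)
    then show "core b lam = sigma" using beta_inj[OF cc(1) ps cc(2) sk] by simp
  qed
qed



definition Vset :: "nat \<Rightarrow> nat \<Rightarrow> (nat \<Rightarrow> nat) set" where
  "Vset q n = {v \<in> {..<q} \<rightarrow>\<^sub>E UNIV. sum v {..<q} = n}"

lemma card_Vset:
  assumes q: "0 < q"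
  shows "card (Vset q n) = (n + q - 1) choose (q - 1)"
proof -
  have bij: "bij_betw (\<lambda>v. map v [0..<q]) (Vset q n) {l. length l = q \<and> sum_list l = n}"
  proof (rule bij_betwI[where g = "\<lambda>l. \<lambda>j\<in>{..<q}. l ! j"])
    show "(\<lambda>v. map v [0..<q]) \<in> Vset q n \<rightarrow> {l. length l = q \<and> sum_list l = n}"
      unfolding Vset_def by (auto simp: sum_list_sum_nth atLeast0LessThan)
    show "(\<lambda>l. \<lambda>j\<in>{..<q}. l ! j) \<in> {l. length l = q \<and> sum_list l = n} \<rightarrow> Vset q n"
    proof
      fix l assume "l \<in> {l. length l = q \<and> sum_list l = n}"
      then have "length l = q" "sum_list l = n" by auto
      moreover have "(\<lambda>j\<in>{..<q}. l ! j) \<in> {..<q} \<rightarrow>\<^sub>E UNIV" by simp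
      moreover have "sum (\<lambda>j\<in>{..<q}. l ! j) {..<q} = sum ((!) l) {..<q}" by (rule sum.cong) auto
      ultimately show "(\<lambda>j\<in>{..<q}. l ! j) \<in> Vset q n" unfolding Vset_def
        by (simp add: sum_list_sum_nth atLeast0LessThan)
    qed
    show "(\<lambda>j\<in>{..<q}. map v [0..<q] ! j) = v" if "v \<in> Vset q n" for v
      using that unfolding Vset_def by (auto simp: PiE_def extensional_def)
    show "map (\<lambda>j\<in>{..<q}. l ! j) [0..<q] = l" if "l \<in> {l. length l = q \<and> sum_list l = n}" for l
      using that by (auto intro: nth_equalityI)
  qed
  have "card (Vset q n) = (n + q - 1) choose n"
    using bij_betw_same_card[OF bij] card_length_sum_list[of q n] by simp
  also have "\<dots> = (n + q - 1) choose (q - 1)"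
    using binomial_symmetric[of n "n + q - 1"] q by simp
  finally show ?thesis .
qed

lemma N_formula:
  assumes b: "0 < b" and q: "0 < q" and a: "a = q * b"
    and ps: "is_partition sigma" and cs: "is_core b sigma" and sk: "length sigma \<le> k"
  shows "N_sigma a b sigma k = (\<Prod>r<b. (cnt b r (beta k sigma) + q - 1) choose (q - 1))"
proof -
  define d where "d r = cnt b r (beta k sigma)" for r
  have a0: "0 < a" using a b q by simp
  define L where "L = {lam. is_partition lam \<and> is_core a lam \<and> core b lam = sigma \<and> length lam \<le> k}"
  define T where "T = {c \<in> {..<a} \<rightarrow>\<^sub>E UNIV. \<forall>r<b. (\<Sum>j<q. c (r + b * j)) = d r}"
  define Phi where "Phi lam = (\<lambda>s\<in>{..<a}. cnt a s (beta k lam))" for lam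
  have rbj: "r + b * j < a" if "r < b" "j < q" for r j
  proof -
    have "b * j + b \<le> b * q" using that(2) by (metis mult_Suc_right Suc_leI mult_le_mono2 add.commute)
    then show ?thesis using that(1) a by (simp add: mult.commute)
  qed
  have refine: "cnt b r B = (\<Sum>j<q. cnt a (r + b * j) B)" if "finite B" "r < b" for B r
    using cnt_refine[OF b that q] a by simp
  have sigma_ok: "(\<forall>r<b. cnt b r (beta k lam) = d r) \<longleftrightarrow> core b lam = sigma"
    if "is_partition lam" "length lam \<le> k" for lam
    using core_b_iff[OF b that ps cs sk] unfolding d_def by auto
  have bij1: "bij_betw Phi L T"
  proof (rule bij_betw_imageI)
    show "inj_on Phi L"
    proof (rule inj_onI)
      fix l1 l2 assume l1: "l1 \<in> L" and l2: "l2 \<in> L" and e: "Phi l1 = Phi l2"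
      have p1: "is_partition l1" "length l1 \<le> k" "closed a (beta k l1)"
        using l1 core_iff_closed[OF _ _ a0] unfolding L_def by auto
      have p2: "is_partition l2" "length l2 \<le> k" "closed a (beta k l2)"
        using l2 core_iff_closed[OF _ _ a0] unfolding L_def by auto
      have ce: "cnt a s (beta k l1) = cnt a s (beta k l2)" if "s < a" for s
        using e that unfolding Phi_def by (metis lessThan_iff restrict_apply')
      have "beta k l1 = Sset a (\<lambda>s. cnt a s (beta k l1))"
        using closed_Sset[OF a0 p1(3) beta_card(2)[OF p1(1)]] .
      also have "\<dots> = Sset a (\<lambda>s. cnt a s (beta k l2))" by (rule Sset_cong[OF ce a0])
      also have "\<dots> = beta k l2"
        using closed_Sset[OF a0 p2(3) beta_card(2)[OF p2(1)]] by simp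
      finally show "l1 = l2" using beta_inj[OF p1(1) p2(1) p1(2) p2(2)] by simp
    qed
  next
    show "Phi ` L = T"
    proof (intro set_eqI iffI)
      fix c assume "c \<in> Phi ` L"
      then obtain lam where lam: "lam \<in> L" "c = Phi lam" by auto
      have pl: "is_partition lam" "length lam \<le> k" "core b lam = sigma" using lam unfolding L_def by auto
      have "(\<Sum>j<q. c (r + b * j)) = d r" if "r < b" for r
      proof -
        have "(\<Sum>j<q. c (r + b * j)) = (\<Sum>j<q. cnt a (r + b * j) (beta k lam))"
          using rbj[OF that] unfolding lam(2) Phi_def by (intro sum.cong) auto
        also have "\<dots> = cnt b r (beta k lam)" using refine[OF beta_card(2)[OF pl(1)] that] by simp
        also have "\<dots> = d r" using sigma_ok[OF pl(1,2)] pl(3) that by blast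
        finally show ?thesis .
      qed
      then show "c \<in> T" unfolding T_def lam(2) Phi_def by auto
    next
      fix c assume cT: "c \<in> T"
      define B where "B = Sset a c"
      have fB: "finite B" unfolding B_def by (rule Sset_finite[OF a0])
      have cntB: "cnt a s B = c s" if "s < a" for s unfolding B_def by (rule cnt_Sset[OF a0 that])
      have cntbB: "cnt b r B = d r" if "r < b" for r
      proof -
        have "cnt b r B = (\<Sum>j<q. cnt a (r + b * j) B)" by (rule refine[OF fB that])
        also have "\<dots> = (\<Sum>j<q. c (r + b * j))" using rbj[OF that] cntB by (intro sum.cong) auto
        also have "\<dots> = d r" using cT that unfolding T_def by auto
        finally show ?thesis .
      qed
      have "card B = (\<Sum>r<b. cnt b r B)" by (rule card_cnt[OF b fB])
      also have "\<dots> = (\<Sum>r<b. d r)" using cntbB by simp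
      also have "\<dots> = card (beta k sigma)" unfolding d_def
        using card_cnt[OF b beta_card(2)[OF ps]] by simp
      also have "\<dots> = k" using beta_card(1)[OF ps] .
      finally have cB: "card B = k" .
      obtain lam where lam: "is_partition lam" "length lam \<le> k" "beta k lam = B"
        using beta_surj[OF fB cB] by blast
      have ac: "is_core a lam" using core_iff_closed[OF lam(1,2) a0] lam(3) Sset_closed[OF a0]
        unfolding B_def by simp
      have bc: "core b lam = sigma" using sigma_ok[OF lam(1,2)] cntbB lam(3) by simp
      have "Phi lam = c"
      proof (rule ext)
        fix s show "Phi lam s = c s"
        proof (cases "s < a")
          case True then show ?thesis unfolding Phi_def lam(3) using cntB by simp
        next
          case False then show ?thesis using cT unfolding Phi_def T_def PiE_def extensional_def by auto
        qed
      qed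
      moreover have "lam \<in> L" unfolding L_def using lam ac bc by simp
      ultimately show "c \<in> Phi ` L" by blast
    qed
  qed
  define P where "P = PiE {..<b} (\<lambda>r. Vset q (d r))"
  define Psi where "Psi c = (\<lambda>r\<in>{..<b}. \<lambda>j\<in>{..<q}. c (r + b * j))" for c :: "nat \<Rightarrow> nat"
  have bij2: "bij_betw Psi T P"
  proof (rule bij_betwI[where g = "\<lambda>w. \<lambda>s\<in>{..<a}. w (s mod b) (s div b)"])
    show "Psi \<in> T \<rightarrow> P"
    proof
      fix c assume "c \<in> T"
      then have "(\<Sum>j<q. c (r + b * j)) = d r" if "r < b" for r using that unfolding T_def by auto
      then show "Psi c \<in> P" unfolding P_def Psi_def Vset_def by auto
    qed
    show "(\<lambda>w. \<lambda>s\<in>{..<a}. w (s mod b) (s div b)) \<in> P \<rightarrow> T"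
    proof
      fix w assume w: "w \<in> P"
      have "(\<Sum>j<q. (\<lambda>s\<in>{..<a}. w (s mod b) (s div b)) (r + b * j)) = d r" if "r < b" for r
      proof -
        have "(\<Sum>j<q. (\<lambda>s\<in>{..<a}. w (s mod b) (s div b)) (r + b * j)) = (\<Sum>j<q. w r j)"
          using rbj[OF that] that by (intro sum.cong) auto
        also have "\<dots> = d r" using w that unfolding P_def Vset_def by auto
        finally show ?thesis .
      qed
      then show "(\<lambda>s\<in>{..<a}. w (s mod b) (s div b)) \<in> T" unfolding T_def by auto
    qed
    show "(\<lambda>s\<in>{..<a}. Psi c (s mod b) (s div b)) = c" if "c \<in> T" for c
    proof (rule ext)
      fix s show "(\<lambda>s\<in>{..<a}. Psi c (s mod b) (s div b)) s = c s"
      proof (cases "s < a")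
        case True
        have "s div b < q" using True a b by (simp add: div_less_iff_less_mult)
        moreover have "s mod b + b * (s div b) = s" by simp
        ultimately show ?thesis using True b unfolding Psi_def by simp
      next
        case False then show ?thesis using that unfolding T_def PiE_def extensional_def by auto
      qed
    qed
    show "Psi (\<lambda>s\<in>{..<a}. w (s mod b) (s div b)) = w" if "w \<in> P" for w
    proof (rule ext)+
      fix r j
      show "Psi (\<lambda>s\<in>{..<a}. w (s mod b) (s div b)) r j = w r j"
      proof (cases "r < b")
        case True
        show ?thesis
        proof (cases "j < q")
          case True': True
          then show ?thesis using True rbj[OF True True'] unfolding Psi_def by simp
        next
          case False
          have "w r \<in> Vset q (d r)" using that True unfolding P_def by auto
          then have "w r j = undefined" using False unfolding Vset_def PiE_def extensional_def by auto
          then show ?thesis using False True unfolding Psi_def by simp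
        qed
      next
        case False
        then have "w r = undefined" using that unfolding P_def PiE_def extensional_def by auto
        then show ?thesis using False unfolding Psi_def by simp
      qed
    qed
  qed
  have "N_sigma a b sigma k = card L" unfolding N_sigma_def L_def ..
  also have "\<dots> = card T" using bij_betw_same_card[OF bij1] .
  also have "\<dots> = card P" using bij_betw_same_card[OF bij2] .
  also have "\<dots> = (\<Prod>r<b. card (Vset q (d r)))" unfolding P_def by (simp add: card_PiE)
  also have "\<dots> = (\<Prod>r<b. (d r + q - 1) choose (q - 1))" using card_Vset[OF q] by simp
  finally show ?thesis unfolding d_def .
qed



lemma beta_shift:
  assumes ps: "is_partition sigma" and sk: "length sigma \<le> k"
  shows "beta (k + b) sigma = (\<lambda>x. x + b) ` beta k sigma \<union> {..<b}"
proof (intro set_eqI iffI)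
  fix x assume "x \<in> beta (k + b) sigma"
  then obtain i where i: "i < k + b" "x = bx sigma (k + b) i" unfolding beta_def by auto
  show "x \<in> (\<lambda>x. x + b) ` beta k sigma \<union> {..<b}"
  proof (cases "i < k")
    case True
    then have "x = bx sigma k i + b" using i unfolding bx_def by simp
    then show ?thesis using True unfolding beta_def by auto
  next
    case False
    then have "pa sigma i = 0" using sk pa_zero[of sigma i] by simp
    then have "x < b" using i False unfolding bx_def by simp
    then show ?thesis by simp
  qed
next
  fix x assume "x \<in> (\<lambda>x. x + b) ` beta k sigma \<union> {..<b}"
  then consider (a) i where "i < k" "x = bx sigma k i + b" | (b) "x < b" unfolding beta_def by auto
  then show "x \<in> beta (k + b) sigma"
  proof cases
    case a
    then have "x = bx sigma (k + b) i" unfolding bx_def by simp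
    then show ?thesis using a unfolding beta_def by auto
  next
    case b
    define i where "i = k + b - 1 - x"
    have "pa sigma i = 0" using sk pa_zero[of sigma i] b unfolding i_def by simp
    then have "x = bx sigma (k + b) i" using b unfolding bx_def i_def by simp
    moreover have "i < k + b" using b unfolding i_def by simp
    ultimately show ?thesis unfolding beta_def by auto
  qed
qed

lemma cnt_shift:
  assumes ps: "is_partition sigma" and sk: "length sigma \<le> k" and rb: "r < b"
  shows "cnt b r (beta (k + b) sigma) = cnt b r (beta k sigma) + 1"
proof -
  have fin: "finite (beta k sigma)" using beta_card[OF ps] by simp
  have e: "{x \<in> beta (k + b) sigma. x mod b = r} =
        insert r ((\<lambda>x. x + b) ` {x \<in> beta k sigma. x mod b = r})"
    unfolding beta_shift[OF ps sk] using rb by (auto simp: image_iff)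
  have "r \<notin> (\<lambda>x. x + b) ` {x \<in> beta k sigma. x mod b = r}" using rb by auto
  moreover have "finite ((\<lambda>x. x + b) ` {x \<in> beta k sigma. x mod b = r})" using fin by simp
  ultimately show ?thesis unfolding cnt_def e
    by (simp add: card_image)
qed

lemma cnt_shift_n:
  assumes ps: "is_partition sigma" and sk: "length sigma \<le> k" and rb: "r < b"
  shows "cnt b r (beta (k + b * n) sigma) = cnt b r (beta k sigma) + n"
proof (induction n)
  case 0 then show ?case by simp
next
  case (Suc n)
  have e: "k + b * Suc n = (k + b * n) + b" by simp
  have h: "cnt b r (beta ((k + b * n) + b) sigma) = cnt b r (beta (k + b * n) sigma) + 1"
    by (rule cnt_shift[OF ps _ rb]) (use sk in simp)
  show ?case unfolding e h Suc by simp
qed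

lemma fact_choose_prod:
  "fact p * ((d + p) choose p) = (\<Prod>m\<in>{1..p}. d + m)"
proof (induction p)
  case 0 then show ?case by simp
next
  case (Suc p)
  have "Suc p * (Suc (d + p) choose Suc p) = Suc (d + p) * ((d + p) choose p)"
    by (rule Suc_times_binomial)
  have f: "fact (Suc p) * (Suc (d + p) choose Suc p) = fact p * (Suc p * (Suc (d + p) choose Suc p))"
    by (metis fact_Suc mult.assoc mult.commute of_nat_id)
  have "fact (Suc p) * ((d + Suc p) choose Suc p) = Suc (d + p) * (fact p * ((d + p) choose p))"
    unfolding add_Suc_right f \<open>Suc p * _ = _\<close> by (simp only: mult.left_commute)
  also have "\<dots> = (\<Prod>m\<in>{1..Suc p}. d + m)" using Suc by (simp add: algebra_simps)
  finally show ?case by simp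
qed



theorem theorem12:
  fixes a b :: nat and sigma :: "nat list"
  assumes "0 < b" and "0 < a" and "b dvd a"
    and "is_partition sigma" and "is_core b sigma"
  shows "\<exists>Q :: nat \<Rightarrow> rat.
           quasipoly_deg_lead Q b (a - b) (1 / (of_nat (fact (a div b - 1))) ^ b) \<and>
           (\<forall>k \<ge> length sigma. of_nat (N_sigma a b sigma k) = Q k)"
proof -
  note b = assms(1) and ps = assms(4) and cs = assms(5)
  define q where "q = a div b"
  have a: "a = q * b" unfolding q_def using assms(3) by simp
  have q: "0 < q" using a assms(2) by (cases q) auto
  define L0 where "L0 = length sigma"
  define d where "d k r = cnt b r (beta k sigma)" for k r
  define D where "D i r = int (d (i + b * L0) r) - int L0" for i r
  define C :: rat where "C = 1 / (of_nat (fact (q - 1))) ^ b"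
  define Pol where "Pol i = smult C (\<Prod>(r, m) \<in> {..<b} \<times> {1..q - 1}. [: of_int (D i r) + of_nat m, 1 :])" for i
  define Q where "Q k = poly (Pol (k mod b)) (of_nat (k div b))" for k
  have C0: "C \<noteq> 0" unfolding C_def by simp
  have quasi: "quasipoly_deg_lead Q b (a - b) C"
    unfolding quasipoly_deg_lead_def
  proof (intro allI impI exI conjI)
    fix i assume ib: "i < b"
    have "degree (\<Prod>(r, m) \<in> {..<b} \<times> {1..q - 1}. [: of_int (D i r) + of_nat m, 1 :] :: rat poly)
        = (\<Sum>(r, m) \<in> {..<b} \<times> {1..q - 1}. degree ([: of_int (D i r) + of_nat m, 1 :] :: rat poly))"
      by (subst degree_prod_eq_sum_degree) (auto simp: case_prod_beta)
    also have "\<dots> = card ({..<b} \<times> {1..q - 1})" by (simp add: case_prod_beta)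
    also have "\<dots> = a - b" unfolding card_cartesian_product using a q
      by (simp add: algebra_simps diff_mult_distrib2)
    finally show "degree (Pol i) = a - b" unfolding Pol_def using C0 by simp
    have "lead_coeff (\<Prod>(r, m) \<in> {..<b} \<times> {1..q - 1}. [: of_int (D i r) + of_nat m, 1 :] :: rat poly) = 1"
      by (simp add: lead_coeff_prod case_prod_beta)
    then show "lead_coeff (Pol i) = C" unfolding Pol_def by (simp add: lead_coeff_smult)
    fix n
    show "Q (i + n * b) = poly (Pol i) (of_nat n)" unfolding Q_def using ib by simp
  qed
  have vals: "of_nat (N_sigma a b sigma k) = Q k" if kL: "k \<ge> length sigma" for k
  proof -
    define i where "i = k mod b"
    define n where "n = k div b"
    have kin: "k = i + b * n" unfolding i_def n_def by simp
    have ib: "i < b" unfolding i_def using b by simp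
    have dD: "int (d k r) = D i r + int n" if rb: "r < b" for r
    proof (cases "L0 \<le> n")
      case True
      have "k = (i + b * L0) + b * (n - L0)" using kin True by (simp add: algebra_simps diff_mult_distrib2)
      moreover have hL: "length sigma \<le> i + b * L0"
      proof -
        have "L0 \<le> b * L0" using b by simp
        then show ?thesis unfolding L0_def by linarith
      qed
      ultimately have "d k r = d (i + b * L0) r + (n - L0)"
        unfolding d_def using cnt_shift_n[OF ps hL rb, of "n - L0"] by simp
      then show ?thesis unfolding D_def using True by simp
    next
      case False
      have "i + b * L0 = k + b * (L0 - n)" using kin False by (simp add: algebra_simps diff_mult_distrib2)
      then have "d (i + b * L0) r = d k r + (L0 - n)"
        unfolding d_def using cnt_shift_n[OF ps _ rb, of k "L0 - n"] kL by simp
      then show ?thesis unfolding D_def using False by simp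
    qed
    have "N_sigma a b sigma k = (\<Prod>r<b. (d k r + q - 1) choose (q - 1))"
      unfolding d_def by (rule N_formula[OF b q a ps cs kL])
    then have "(of_nat (N_sigma a b sigma k) :: rat) = (\<Prod>r<b. of_nat ((d k r + (q - 1)) choose (q - 1)))"
      using q by simp
    also have "\<dots> = (\<Prod>r<b. (\<Prod>m\<in>{1..q - 1}. of_nat (d k r) + of_nat m) / of_nat (fact (q - 1)))"
    proof (rule prod.cong[OF refl])
      fix r
      have "fact (q - 1) * ((d k r + (q - 1)) choose (q - 1)) = (\<Prod>m\<in>{1..q - 1}. d k r + m)"
        by (rule fact_choose_prod)
      then have "(of_nat (fact (q - 1) * ((d k r + (q - 1)) choose (q - 1))) :: rat) =
                 of_nat (\<Prod>m\<in>{1..q - 1}. d k r + m)"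
        by (rule arg_cong)
      then have "(of_nat (fact (q - 1)) :: rat) * of_nat ((d k r + (q - 1)) choose (q - 1)) =
                 (\<Prod>m\<in>{1..q - 1}. of_nat (d k r) + of_nat m)"
        by simp
      then show "of_nat ((d k r + (q - 1)) choose (q - 1)) =
            (\<Prod>m\<in>{1..q - 1}. of_nat (d k r) + of_nat m) / (of_nat (fact (q - 1)) :: rat)"
        by (simp add: field_simps)
    qed
    also have "\<dots> = C * (\<Prod>r<b. \<Prod>m\<in>{1..q - 1}. of_nat (d k r) + of_nat m)"
      unfolding C_def by (simp add: prod_dividef)
    also have "\<dots> = C * (\<Prod>r<b. \<Prod>m\<in>{1..q - 1}. of_int (D i r) + of_nat m + of_nat n)"
    proof -
      have "(of_nat (d k r) :: rat) = of_int (D i r) + of_nat n" if "r < b" for r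
      proof -
        have "(of_int (int (d k r)) :: rat) = of_int (D i r + int n)" using dD[OF that] by simp
        then show ?thesis by simp
      qed
      then show ?thesis by (simp add: algebra_simps)
    qed
    also have "\<dots> = Q k"
      unfolding Q_def Pol_def i_def[symmetric] n_def[symmetric]
      by (simp add: poly_prod prod.cartesian_product case_prod_beta algebra_simps)
    finally show ?thesis .
  qed
  show ?thesis
    using quasi vals unfolding C_def q_def by blast
qed

end
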